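(* For every finite zero-set $\mathcal Z$, every integer $k\ge0$ and every $(\alpha,\beta)\in[0,1]^2$, $$I(\alpha,\beta,\mathcal Z)\ge\gamma(\mathcal Z^{\swarrow k})\Big(1-\max(\alpha,\beta)\Big(1+\frac1{k+1}\Big)\Big).$$
   Context: $\mathbb Z_+=\{0,1,2,\dots\}$, $R_{a,b}=([0,a-1]\times[0,b-1])\cap\mathbb Z_+^2$; a zero-set is a union of such rectangles. $\mathrm{row}(x,A),\mathrm{col}(x,A)$ count points of $A$ on the horizontal/vertical line through $x$; $\mathcal T(A)=A\cup\{x\notin A:(\mathrm{row}(x,A),\mathrm{col}(x,A))\notin\mathcal Z\}$; $A$ spans if $\bigcup_t\mathcal T^t(A)=\mathbb Z_+^2$; $\gamma(\mathcal Z)$ is the minimal size of a finite spanning set. $\mathcal Z^{\swarrow k}=\{(u-k,v-k):(u,v)\in\mathcal Z,u\ge k,v\ge k\}$. Large deviation rate: for $\alpha,\beta\ge0$, as $p\to0$ let integers $N,M\to\infty$ with $\log N\sim-\alpha\log p$, $\log M\sim-\beta\log p$; the initial set contains each point of $R_{N,M}$ independently with probability $p$; $I(\alpha,\beta,\mathcal Z)=\lim_{p\to0}\log P_p(\text{initial set spans})/\log p$ (this limit exists). *)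

theory Defs
  imports "HOL-Analysis.Analysis" "HOL-Library.Extended_Nat"
begin

type_synonym pt = "nat \<times> nat"

definition rect :: "nat \<Rightarrow> nat \<Rightarrow> pt set" where
  "rect a b = {(x, y). x < a \<and> y < b}"

definition zero_set :: "pt set \<Rightarrow> bool" where
  "zero_set Z \<longleftrightarrow> (\<exists>S. Z = (\<Union>(a, b)\<in>S. rect a b))"

definition ecount :: "pt set \<Rightarrow> enat" where
  "ecount S = (if finite S then enat (card S) else \<infinity>)"

definition row :: "pt \<Rightarrow> pt set \<Rightarrow> enat" where
  "row x A = ecount {y \<in> A. snd y = snd x}"

definition col :: "pt \<Rightarrow> pt set \<Rightarrow> enat" where
  "col x A = ecount {y \<in> A. fst y = fst x}"

text \<open>Membership of a pair of extended naturals in Z (infinite counts are never in Z).\<close>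
definition in_Z :: "enat \<times> enat \<Rightarrow> pt set \<Rightarrow> bool" where
  "in_Z uv Z \<longleftrightarrow> (\<exists>u v. fst uv = enat u \<and> snd uv = enat v \<and> (u, v) \<in> Z)"

definition T_step :: "pt set \<Rightarrow> pt set \<Rightarrow> pt set" where
  "T_step Z A = A \<union> {x. x \<notin> A \<and> \<not> in_Z (row x A, col x A) Z}"

definition spans :: "pt set \<Rightarrow> pt set \<Rightarrow> bool" where
  "spans Z A \<longleftrightarrow> (\<Union>t. (T_step Z ^^ t) A) = UNIV"

definition gamma :: "pt set \<Rightarrow> nat" where
  "gamma Z = (LEAST n. \<exists>A. finite A \<and> card A = n \<and> spans Z A)"

definition shift_diag :: "pt set \<Rightarrow> nat \<Rightarrow> pt set" where
  "shift_diag Z k = {(u - k, v - k) | u v. (u, v) \<in> Z \<and> u \<ge> k \<and> v \<ge> k}"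

text \<open>P_p(initial p-random subset of R_{N,M} spans).\<close>
definition span_prob :: "pt set \<Rightarrow> real \<Rightarrow> nat \<Rightarrow> nat \<Rightarrow> real" where
  "span_prob Z p N M =
     (\<Sum>A\<in>Pow (rect N M). if spans Z A then p ^ card A * (1 - p) ^ (N * M - card A) else 0)"

definition rate_ratio :: "pt set \<Rightarrow> real \<Rightarrow> nat \<Rightarrow> nat \<Rightarrow> ereal" where
  "rate_ratio Z p N M =
     (if span_prob Z p N M = 0 then \<infinity> else ereal (ln (span_prob Z p N M) / ln p))"

end

theory Submission
  imports Defs
begin


lemma zero_set_down:
  assumes "zero_set Z" "(u,v) \<in> Z" "u' \<le> u" "v' \<le> v" shows "(u',v') \<in> Z"
  using assms unfolding zero_set_def rect_def by fastforce

lemma shift_diag_iff: "(a,b) \<in> shift_diag Z k \<longleftrightarrow> (a+k,b+k) \<in> Z"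
proof
  assume "(a,b) \<in> shift_diag Z k"
  then obtain u v where "(a,b) = (u-k,v-k)" "(u,v)\<in>Z" "u\<ge>k" "v\<ge>k" unfolding shift_diag_def by blast
  then show "(a+k,b+k) \<in> Z" by auto
next
  assume "(a+k,b+k) \<in> Z"
  then show "(a,b) \<in> shift_diag Z k" unfolding shift_diag_def by force
qed

lemma finite_shift_diag: "finite Z \<Longrightarrow> finite (shift_diag Z k)"
proof -
  assume "finite Z"
  have "shift_diag Z k \<subseteq> (\<lambda>(u,v). (u-k,v-k)) ` Z" unfolding shift_diag_def by force
  then show ?thesis using \<open>finite Z\<close> finite_subset by blast
qed

lemma T_incseq: "incseq (\<lambda>t. (T_step Z ^^ t) A)"
  by (rule incseq_SucI) (auto simp: T_step_def)

lemma ecount_le_add: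
  assumes "S \<subseteq> T \<union> U" "finite U" "card U \<le> k"
  shows "ecount S \<le> ecount T + enat k"
proof (cases "finite T")
  case False then show ?thesis by (simp add: ecount_def)
next
  case True
  then have fS: "finite S" using assms finite_subset by blast
  have "card S \<le> card (T \<union> U)" using assms True by (intro card_mono) auto
  also have "\<dots> \<le> card T + card U" by (rule card_Un_le)
  finally show ?thesis using fS True assms(3) by (simp add: ecount_def)
qed

lemma compare_step:
  assumes zs: "zero_set Z"
  and fL: "finite L0" and cr: "\<And>c. card {y\<in>L0. snd y = c} \<le> k"
  and cc: "\<And>c. card {y\<in>L0. fst y = c} \<le> k"
  and sub: "A \<subseteq> B \<union> L0"
  shows "T_step Z A \<subseteq> T_step (shift_diag Z k) B \<union> L0"
proof
  fix x assume x: "x \<in> T_step Z A"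
  show "x \<in> T_step (shift_diag Z k) B \<union> L0"
  proof (cases "x \<in> A \<or> x \<in> B \<or> x \<in> L0")
    case True then show ?thesis using sub by (auto simp: T_step_def)
  next
    case False
    then have nz: "\<not> in_Z (row x A, col x A) Z" using x by (auto simp: T_step_def)
    have "\<not> in_Z (row x B, col x B) (shift_diag Z k)"
    proof
      assume "in_Z (row x B, col x B) (shift_diag Z k)"
      then obtain a b where ab: "row x B = enat a" "col x B = enat b" "(a+k,b+k) \<in> Z"
        unfolding in_Z_def shift_diag_iff by auto
      have "row x A \<le> row x B + enat k" unfolding row_def
        by (rule ecount_le_add[where U="{y\<in>L0. snd y = snd x}"]) (use sub fL cr in auto)
      then have r: "row x A \<le> enat (a+k)" using ab by simp
      have "col x A \<le> col x B + enat k" unfolding col_def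
        by (rule ecount_le_add[where U="{y\<in>L0. fst y = fst x}"]) (use sub fL cc in auto)
      then have c: "col x A \<le> enat (b+k)" using ab by simp
      obtain a' where a': "row x A = enat a'" "a' \<le> a+k" using r by (cases "row x A") auto
      obtain b' where b': "col x A = enat b'" "b' \<le> b+k" using c by (cases "col x A") auto
      have "(a',b') \<in> Z" using zero_set_down[OF zs ab(3) a'(2) b'(2)] .
      then have "in_Z (row x A, col x A) Z" using a' b' unfolding in_Z_def by auto
      then show False using nz by simp
    qed
    then show ?thesis using False by (auto simp: T_step_def)
  qed
qed

lemma compare_iter:
  assumes zs: "zero_set Z"
  and fL: "finite L0" and cr: "\<And>c. card {y\<in>L0. snd y = c} \<le> k"
  and cc: "\<And>c. card {y\<in>L0. fst y = c} \<le> k"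
  and sub: "A \<subseteq> B \<union> L0"
  shows "(T_step Z ^^ t) A \<subseteq> (T_step (shift_diag Z k) ^^ t) B \<union> L0"
proof (induction t)
  case 0 then show ?case using sub by simp
next
  case (Suc t) then show ?case using compare_step[OF zs fL cr cc Suc] by simp
qed

lemma finite_in_chain:
  assumes "incseq C" "finite F" "F \<subseteq> (\<Union>t. C t)"
  shows "\<exists>t. F \<subseteq> C t"
  using assms(2,3)
proof (induction F rule: finite_induct)
  case empty then show ?case by simp
next
  case (insert x F)
  then obtain t1 where "F \<subseteq> C t1" by auto
  moreover obtain t2 where "x \<in> C t2" using insert by auto
  ultimately have "insert x F \<subseteq> C (max t1 t2)"
    using assms(1) unfolding incseq_def by (meson insert_subset max.cobounded1 max.cobounded2 subsetD subsetI)
  then show ?case by blast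
qed

lemma closure_fill:
  assumes fZ: "finite Z'" and fL: "finite L0" and cov: "UNIV - L0 \<subseteq> (\<Union>t. (T_step Z' ^^ t) B)"
  shows "spans Z' B"
proof -
  define C where "C t = (T_step Z' ^^ t) B" for t
  have inc: "incseq C" unfolding C_def by (rule T_incseq)
  define D where "D = Suc (Max (insert 0 (fst ` Z')))"
  have Dlt: "a < D" if "(a,b) \<in> Z'" for a b
  proof -
    have "a \<le> Max (insert 0 (fst ` Z'))" using fZ that by (intro Max_ge) force+
    then show ?thesis unfolding D_def by simp
  qed
  have "x \<in> (\<Union>t. C t)" for x
  proof (cases "x \<in> L0")
    case False then show ?thesis using cov unfolding C_def by auto
  next
    case True
    have inf1: "infinite {y::pt. snd y = snd x}"
    proof
      assume "finite {y::pt. snd y = snd x}"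
      moreover have "range (\<lambda>i. (i, snd x)) \<subseteq> {y::pt. snd y = snd x}" by auto
      ultimately have "finite (range (\<lambda>i::nat. (i, snd x)))" using finite_subset by blast
      moreover have "inj (\<lambda>i::nat. (i, snd x))" by (auto simp: inj_def)
      ultimately show False using finite_imageD by blast
    qed
    have "infinite ({y::pt. snd y = snd x} - L0)" using inf1 fL by simp
    then obtain F where F: "F \<subseteq> {y::pt. snd y = snd x} - L0" "card F = D" "finite F"
      using infinite_arbitrarily_large by blast
    have "F \<subseteq> (\<Union>t. C t)" using F(1) cov unfolding C_def by auto
    then obtain t where t: "F \<subseteq> C t" using finite_in_chain[OF inc F(3)] by blast
    have Fsub: "F \<subseteq> {y \<in> C t. snd y = snd x}" using t F(1) by auto
    have "\<not> in_Z (row x (C t), col x (C t)) Z'"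
    proof
      assume "in_Z (row x (C t), col x (C t)) Z'"
      then obtain a b where ab: "row x (C t) = enat a" "(a,b) \<in> Z'" unfolding in_Z_def by auto
      then have fin: "finite {y \<in> C t. snd y = snd x}" "card {y \<in> C t. snd y = snd x} = a"
        unfolding row_def ecount_def by (auto split: if_splits)
      have "D \<le> a" using card_mono[OF fin(1) Fsub] F(2) fin(2) by simp
      then show False using Dlt[OF ab(2)] by simp
    qed
    then have "x \<in> C (Suc t)" unfolding C_def by (auto simp: T_step_def)
    then show ?thesis by blast
  qed
  then show ?thesis unfolding spans_def C_def by blast
qed

lemma heavy_spans:
  assumes zs: "zero_set Z" and fZ: "finite Z" and fA: "finite A" and sp: "spans Z A"
  shows "spans (shift_diag Z k)
    {x\<in>A. k+1 \<le> card {y\<in>A. snd y = snd x} \<or> k+1 \<le> card {y\<in>A. fst y = fst x}}"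
    (is "spans _ ?B")
proof -
  define L0 where "L0 = A - ?B"
  have fL: "finite L0" using fA unfolding L0_def by simp
  have cr: "card {y\<in>L0. snd y = c} \<le> k" for c
  proof (cases "\<exists>y0\<in>L0. snd y0 = c")
    case True
    then obtain y0 where y0: "y0 \<in> L0" "snd y0 = c" by blast
    then have "card {y\<in>A. snd y = c} \<le> k" unfolding L0_def by auto
    moreover have "card {y\<in>L0. snd y = c} \<le> card {y\<in>A. snd y = c}"
      using fA unfolding L0_def by (intro card_mono) auto
    ultimately show ?thesis by simp
  next
    case False then have "{y\<in>L0. snd y = c} = {}" by blast
    then show ?thesis by (metis card.empty le0)
  qed
  have cc: "card {y\<in>L0. fst y = c} \<le> k" for c
  proof (cases "\<exists>y0\<in>L0. fst y0 = c")
    case True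
    then obtain y0 where y0: "y0 \<in> L0" "fst y0 = c" by blast
    then have "card {y\<in>A. fst y = c} \<le> k" unfolding L0_def by auto
    moreover have "card {y\<in>L0. fst y = c} \<le> card {y\<in>A. fst y = c}"
      using fA unfolding L0_def by (intro card_mono) auto
    ultimately show ?thesis by simp
  next
    case False then have "{y\<in>L0. fst y = c} = {}" by blast
    then show ?thesis by (metis card.empty le0)
  qed
  have down: "\<And>u v u' v'. (u,v)\<in>Z \<Longrightarrow> u'\<le>u \<Longrightarrow> v'\<le>v \<Longrightarrow> (u',v')\<in>Z"
    using zero_set_down[OF zs] by blast
  have sub: "A \<subseteq> ?B \<union> L0" unfolding L0_def by auto
  have "UNIV - L0 \<subseteq> (\<Union>t. (T_step (shift_diag Z k) ^^ t) ?B)"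
  proof
    fix x assume x: "x \<in> UNIV - L0"
    obtain t where "x \<in> (T_step Z ^^ t) A" using sp unfolding spans_def by blast
    then have "x \<in> (T_step (shift_diag Z k) ^^ t) ?B \<union> L0"
      by (rule subsetD[OF compare_iter[OF zs fL cr cc sub]])
    then show "x \<in> (\<Union>t. (T_step (shift_diag Z k) ^^ t) ?B)"
      using x by blast
  qed
  then show ?thesis by (rule closure_fill[OF finite_shift_diag[OF fZ] fL])
qed

lemma gamma_le_heavy:
  assumes "zero_set Z" "finite Z" "finite A" "spans Z A"
  shows "gamma (shift_diag Z k) \<le>
    card {x\<in>A. k+1 \<le> card {y\<in>A. snd y = snd x} \<or> k+1 \<le> card {y\<in>A. fst y = fst x}}"
proof -
  let ?B = "{x\<in>A. k+1 \<le> card {y\<in>A. snd y = snd x} \<or> k+1 \<le> card {y\<in>A. fst y = fst x}}"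
  have "finite ?B" using assms(3) by simp
  then show ?thesis unfolding gamma_def using heavy_spans[OF assms, of k] by (intro Least_le) blast
qed



definition covered :: "nat \<Rightarrow> pt set \<Rightarrow> bool" where
  "covered k W \<longleftrightarrow> (\<forall>w\<in>W. k+1 \<le> card {y\<in>W. snd y = snd w} \<or> k+1 \<le> card {y\<in>W. fst y = fst w})"

lemma extract_witness:
  assumes fB: "finite B" and cov: "covered k B"
  shows "n \<le> card B \<Longrightarrow> \<exists>W\<subseteq>B. covered k W \<and> n \<le> card W \<and> card W \<le> n*(k+1)"
proof (induction n)
  case 0 show ?case by (intro exI[of _ "{}"]) (simp add: covered_def)
next
  case (Suc n)
  then obtain W where W: "W\<subseteq>B" "covered k W" "n \<le> card W" "card W \<le> n*(k+1)" by auto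
  have fW: "finite W" using W(1) fB finite_subset by blast
  show ?case
  proof (cases "Suc n \<le> card W")
    case True then show ?thesis using W by (intro exI[of _ W]) auto
  next
    case False
    then have cW: "card W = n" using W by simp
    have "\<not> B \<subseteq> W"
    proof
      assume "B \<subseteq> W" then have "card B \<le> card W" using fW by (rule card_mono[rotated])
      then show False using Suc.prems cW by simp
    qed
    then obtain x where x: "x \<in> B" "x \<notin> W" by blast
    obtain S0 where S0: "S0 = {y\<in>B. snd y = snd x} \<or> S0 = {y\<in>B. fst y = fst x}" "k+1 \<le> card S0"
      using cov x(1) unfolding covered_def by blast
    have fS0: "finite S0" "S0 \<subseteq> B" "x \<in> S0" using S0(1) fB x(1) by auto
    have "k \<le> card (S0 - {x})" using S0(2) fS0 by simp
    then obtain S' where S': "S' \<subseteq> S0 - {x}" "card S' = k" "finite S'"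
      by (meson obtain_subset_with_card_n)
    define S where "S = insert x S'"
    have cS: "card S = k+1" unfolding S_def using S' by (simp add: card_insert_if) blast
    have SS0: "S \<subseteq> S0" unfolding S_def using S' fS0 by auto
    define W' where "W' = W \<union> S"
    have fW': "finite W'" unfolding W'_def S_def using fW S' by simp
    have sub: "W' \<subseteq> B" unfolding W'_def using W(1) SS0 fS0 by auto
    have c1: "Suc n \<le> card W'"
    proof -
      have "card (insert x W) = Suc n" using x(2) fW cW by simp
      moreover have "card (insert x W) \<le> card W'" using fW' unfolding W'_def S_def
        by (intro card_mono) auto
      ultimately show ?thesis by simp
    qed
    have c2: "card W' \<le> Suc n * (k+1)"
    proof -
      have "card W' \<le> card W + card S" unfolding W'_def by (rule card_Un_le)
      then show ?thesis using cW cS W(4) by simp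
    qed
    have covW': "covered k W'"
      unfolding covered_def
    proof
      fix w assume w: "w \<in> W'"
      show "k+1 \<le> card {y\<in>W'. snd y = snd w} \<or> k+1 \<le> card {y\<in>W'. fst y = fst w}"
      proof (cases "w \<in> W")
        case True
        have m1: "card {y\<in>W. snd y = snd w} \<le> card {y\<in>W'. snd y = snd w}"
          using fW' unfolding W'_def by (intro card_mono) auto
        have m2: "card {y\<in>W. fst y = fst w} \<le> card {y\<in>W'. fst y = fst w}"
          using fW' unfolding W'_def by (intro card_mono) auto
        show ?thesis using W(2) True m1 m2 unfolding covered_def by fastforce
      next
        case False
        then have wS: "w \<in> S" using w unfolding W'_def by blast
        from S0(1) show ?thesis
        proof
          assume h: "S0 = {y\<in>B. snd y = snd x}"
          have "snd w = snd x" using wS SS0 h by auto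
          then have "S \<subseteq> {y\<in>W'. snd y = snd w}" using SS0 h unfolding W'_def by auto
          then have "card S \<le> card {y\<in>W'. snd y = snd w}" using fW' by (intro card_mono) auto
          then show ?thesis using cS by simp
        next
          assume h: "S0 = {y\<in>B. fst y = fst x}"
          have "fst w = fst x" using wS SS0 h by auto
          then have "S \<subseteq> {y\<in>W'. fst y = fst w}" using SS0 h unfolding W'_def by auto
          then have "card S \<le> card {y\<in>W'. fst y = fst w}" using fW' by (intro card_mono) auto
          then show ?thesis using cS by simp
        qed
      qed
    qed
    show ?thesis using sub covW' c1 c2 by blast
  qed
qed

lemma card_fibers_ge:
  fixes f :: "pt \<Rightarrow> nat"
  assumes fW: "finite W" and H: "\<And>y. y \<in> H \<Longrightarrow> c \<le> card {w\<in>W. f w = y}" and fH: "finite H"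
  shows "c * card H \<le> card {w\<in>W. f w \<in> H}"
proof -
  have eq: "{w\<in>W. f w \<in> H} = (\<Union>y\<in>H. {w\<in>W. f w = y})" by auto
  have "card (\<Union>y\<in>H. {w\<in>W. f w = y}) = (\<Sum>y\<in>H. card {w\<in>W. f w = y})"
    using fW fH by (intro card_UN_disjoint) auto
  moreover have "(\<Sum>y\<in>H. c) \<le> (\<Sum>y\<in>H. card {w\<in>W. f w = y})" using H by (intro sum_mono) auto
  ultimately show ?thesis using eq by (simp add: mult.commute)
qed

lemma covered_count:
  assumes fW: "finite W" and cov: "covered k W"
  shows "(k+1) * (card (fst ` W) + card (snd ` W)) \<le> (k+2) * card W"
proof -
  define HR where "HR = {y \<in> snd ` W. k+1 \<le> card {w\<in>W. snd w = y}}"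
  define HC where "HC = {x \<in> fst ` W. k+1 \<le> card {w\<in>W. fst w = x}}"
  define PHH where "PHH = {w\<in>W. snd w \<in> HR \<and> fst w \<in> HC}"
  define PHL where "PHL = {w\<in>W. snd w \<in> HR \<and> fst w \<notin> HC}"
  define PLH where "PLH = {w\<in>W. snd w \<notin> HR \<and> fst w \<in> HC}"
  have fin: "finite HR" "finite HC" "finite PHH" "finite PHL" "finite PLH"
    unfolding HR_def HC_def PHH_def PHL_def PLH_def using fW by auto
  have LR: "snd ` W - HR \<subseteq> snd ` PLH"
  proof
    fix y assume y: "y \<in> snd ` W - HR"
    then obtain w where w: "w \<in> W" "snd w = y" by blast
    have "\<not> k+1 \<le> card {v\<in>W. snd v = snd w}" using y w unfolding HR_def by auto
    then have "k+1 \<le> card {v\<in>W. fst v = fst w}" using cov w(1) unfolding covered_def by blast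
    then have "fst w \<in> HC" unfolding HC_def using w(1) by auto
    then have "w \<in> PLH" unfolding PLH_def using w y by auto
    then show "y \<in> snd ` PLH" using w by blast
  qed
  have LC: "fst ` W - HC \<subseteq> fst ` PHL"
  proof
    fix y assume y: "y \<in> fst ` W - HC"
    then obtain w where w: "w \<in> W" "fst w = y" by blast
    have "\<not> k+1 \<le> card {v\<in>W. fst v = fst w}" using y w unfolding HC_def by auto
    then have "k+1 \<le> card {v\<in>W. snd v = snd w}" using cov w(1) unfolding covered_def by blast
    then have "snd w \<in> HR" unfolding HR_def using w(1) by auto
    then have "w \<in> PHL" unfolding PHL_def using w y by auto
    then show "y \<in> fst ` PHL" using w by blast
  qed
  have cLR: "card (snd ` W - HR) \<le> card PLH"
    using card_mono[OF _ LR] card_image_le[OF fin(5), of snd] fin by simp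
  have cLC: "card (fst ` W - HC) \<le> card PHL"
    using card_mono[OF _ LC] card_image_le[OF fin(4), of fst] fin by simp
  have r: "card (snd ` W) = card HR + card (snd ` W - HR)"
  proof -
    have hs: "HR \<subseteq> snd ` W" unfolding HR_def by auto
    show ?thesis using card_Diff_subset[OF fin(1) hs] card_mono[OF _ hs] fW by simp
  qed
  have c: "card (fst ` W) = card HC + card (fst ` W - HC)"
  proof -
    have hs: "HC \<subseteq> fst ` W" unfolding HC_def by auto
    show ?thesis using card_Diff_subset[OF fin(2) hs] card_mono[OF _ hs] fW by simp
  qed
  have hr: "(k+1) * card HR \<le> card PHH + card PHL"
  proof -
    have "(k+1) * card HR \<le> card {w\<in>W. snd w \<in> HR}"
      by (rule card_fibers_ge[OF fW _ fin(1)]) (auto simp: HR_def)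
    also have "{w\<in>W. snd w \<in> HR} = PHH \<union> PHL" unfolding PHH_def PHL_def by auto
    also have "card (PHH \<union> PHL) = card PHH + card PHL"
      using fin by (intro card_Un_disjoint) (auto simp: PHH_def PHL_def)
    finally show ?thesis .
  qed
  have hc: "(k+1) * card HC \<le> card PHH + card PLH"
  proof -
    have "(k+1) * card HC \<le> card {w\<in>W. fst w \<in> HC}"
      by (rule card_fibers_ge[OF fW _ fin(2)]) (auto simp: HC_def)
    also have "{w\<in>W. fst w \<in> HC} = PHH \<union> PLH" unfolding PHH_def PLH_def by auto
    also have "card (PHH \<union> PLH) = card PHH + card PLH"
      using fin by (intro card_Un_disjoint) (auto simp: PHH_def PLH_def)
    finally show ?thesis .
  qed
  have w: "card PHH + card PHL + card PLH \<le> card W"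
  proof -
    have d1: "card (PHH \<union> PHL) = card PHH + card PHL"
      using fin by (intro card_Un_disjoint) (auto simp: PHH_def PHL_def)
    have d2: "card (PHH \<union> PHL \<union> PLH) = card (PHH \<union> PHL) + card PLH"
      using fin by (intro card_Un_disjoint) (auto simp: PHH_def PHL_def PLH_def)
    have "card PHH + card PHL + card PLH = card (PHH \<union> PHL \<union> PLH)"
      using d1 d2 by simp
    also have "\<dots> \<le> card W" using fW by (intro card_mono) (auto simp: PHH_def PHL_def PLH_def)
    finally show ?thesis .
  qed
  have "(k+1) * (card (fst ` W) + card (snd ` W))
      = (k+1) * card HC + (k+1) * card HR + (k+1) * (card (fst ` W - HC) + card (snd ` W - HR))"
    using r c by (simp add: algebra_simps)
  also have "\<dots> \<le> (card PHH + card PLH) + (card PHH + card PHL) + (k+1) * (card PHL + card PLH)"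
    using hr hc cLR cLC by (intro add_mono mult_le_mono2) auto
  also have "\<dots> \<le> (k+2) * (card PHH + card PHL + card PLH)"
    by (simp add: algebra_simps)
  also have "\<dots> \<le> (k+2) * card W" using w by (rule mult_le_mono2)
  finally show ?thesis .
qed



lemma subset_binom:
  fixes p q :: real
  assumes "finite D"
  shows "(\<Sum>C\<in>Pow D. p ^ card C * q ^ (card D - card C)) = (p + q) ^ card D"
  using assms
proof (induction D rule: finite_induct)
  case empty then show ?case by simp
next
  case (insert x F)
  have disj: "Pow F \<inter> insert x ` Pow F = {}" using insert by auto
  have inj: "inj_on (insert x) (Pow F)"
  proof (rule inj_onI)
    fix a b assume ab: "a \<in> Pow F" "b \<in> Pow F" "insert x a = insert x b"
    then have "x \<notin> a" "x \<notin> b" using insert by auto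
    then show "a = b" using ab(3) by (metis Diff_insert_absorb)
  qed
  have fP: "finite (Pow F)" "finite (insert x ` Pow F)" using insert by auto
  have "(\<Sum>C\<in>Pow (insert x F). p ^ card C * q ^ (card (insert x F) - card C))
     = (\<Sum>C\<in>Pow F. p ^ card C * q ^ (Suc (card F) - card C))
       + (\<Sum>C\<in>insert x ` Pow F. p ^ card C * q ^ (Suc (card F) - card C))"
    unfolding Pow_insert using insert disj fP by (simp add: sum.union_disjoint)
  also have "(\<Sum>C\<in>Pow F. p ^ card C * q ^ (Suc (card F) - card C))
      = q * (\<Sum>C\<in>Pow F. p ^ card C * q ^ (card F - card C))"
    unfolding sum_distrib_left
  proof (rule sum.cong[OF refl])
    fix C assume "C \<in> Pow F"
    then have "card C \<le> card F" using insert by (simp add: card_mono)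
    then have "Suc (card F) - card C = Suc (card F - card C)" by simp
    then show "p ^ card C * q ^ (Suc (card F) - card C) = q * (p ^ card C * q ^ (card F - card C))"
      by simp
  qed
  also have "(\<Sum>C\<in>insert x ` Pow F. p ^ card C * q ^ (Suc (card F) - card C))
      = (\<Sum>C\<in>Pow F. p ^ card (insert x C) * q ^ (Suc (card F) - card (insert x C)))"
    by (rule sum.reindex[OF inj, unfolded comp_def])
  also have "\<dots> = p * (\<Sum>C\<in>Pow F. p ^ card C * q ^ (card F - card C))"
    unfolding sum_distrib_left
  proof (rule sum.cong[OF refl])
    fix C assume C: "C \<in> Pow F"
    then have "x \<notin> C" "finite C" using insert finite_subset by auto
    then have "card (insert x C) = Suc (card C)" by simp
    then show "p ^ card (insert x C) * q ^ (Suc (card F) - card (insert x C)) = p * (p ^ card C * q ^ (card F - card C))"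
      by simp
  qed
  finally show ?case using insert by (simp add: algebra_simps)
qed

lemma super_sum:
  fixes p q :: real
  assumes fR: "finite R" and W: "W \<subseteq> R"
  shows "(\<Sum>A\<in>{A\<in>Pow R. W \<subseteq> A}. p ^ card A * q ^ (card R - card A))
    = p ^ card W * (p + q) ^ (card R - card W)"
proof -
  have fW: "finite W" using fR W finite_subset by blast
  have inj: "inj_on (\<lambda>C. W \<union> C) (Pow (R - W))" unfolding inj_on_def by blast
  have img: "(\<lambda>C. W \<union> C) ` Pow (R - W) = {A\<in>Pow R. W \<subseteq> A}"
  proof
    show "(\<lambda>C. W \<union> C) ` Pow (R - W) \<subseteq> {A\<in>Pow R. W \<subseteq> A}" using W by auto
    show "{A\<in>Pow R. W \<subseteq> A} \<subseteq> (\<lambda>C. W \<union> C) ` Pow (R - W)"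
    proof
      fix A assume "A \<in> {A\<in>Pow R. W \<subseteq> A}"
      then have "A = W \<union> (A - W)" "A - W \<in> Pow (R - W)" by auto
      then show "A \<in> (\<lambda>C. W \<union> C) ` Pow (R - W)" by blast
    qed
  qed
  have "(\<Sum>A\<in>{A\<in>Pow R. W \<subseteq> A}. p ^ card A * q ^ (card R - card A))
      = (\<Sum>C\<in>Pow (R - W). p ^ card (W \<union> C) * q ^ (card R - card (W \<union> C)))"
    unfolding img[symmetric] by (rule sum.reindex[OF inj, unfolded comp_def])
  also have "\<dots> = (\<Sum>C\<in>Pow (R - W). p ^ card W * (p ^ card C * q ^ (card (R - W) - card C)))"
  proof (rule sum.cong[OF refl])
    fix C assume C: "C \<in> Pow (R - W)"
    then have fC: "finite C" using fR finite_subset by auto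
    have cu: "card (W \<union> C) = card W + card C" using C fW fC by (intro card_Un_disjoint) auto
    have cRW: "card (R - W) = card R - card W" using card_Diff_subset[OF fW W] .
    have "card C \<le> card (R - W)" using C fR by (intro card_mono) auto
    moreover have "card W \<le> card R" using card_mono[OF fR W] .
    ultimately have "card R - card (W \<union> C) = card (R - W) - card C" using cu cRW by simp
    then show "p ^ card (W \<union> C) * q ^ (card R - card (W \<union> C)) = p ^ card W * (p ^ card C * q ^ (card (R - W) - card C))"
      using cu by (simp add: power_add)
  qed
  also have "\<dots> = p ^ card W * (p + q) ^ card (R - W)"
    unfolding sum_distrib_left[symmetric] using subset_binom[of "R - W" p q] fR by simp
  also have "card (R - W) = card R - card W" using card_Diff_subset[OF fW W] .
  finally show ?thesis .
qed

lemma finite_rect: "finite (rect N M)"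
proof -
  have "rect N M \<subseteq> {..<N} \<times> {..<M}" unfolding rect_def by auto
  then show ?thesis using finite_subset by blast
qed

lemma card_rect: "card (rect N M) = N * M"
proof -
  have "rect N M = {..<N} \<times> {..<M}" unfolding rect_def by auto
  then show ?thesis by (simp add: card_cartesian_product)
qed

lemma heavy_covered:
  assumes fA: "finite A"
  shows "covered k {x\<in>A. k+1 \<le> card {y\<in>A. snd y = snd x} \<or> k+1 \<le> card {y\<in>A. fst y = fst x}}"
    (is "covered k ?B")
  unfolding covered_def
proof
  fix x assume x: "x \<in> ?B"
  show "k+1 \<le> card {y\<in>?B. snd y = snd x} \<or> k+1 \<le> card {y\<in>?B. fst y = fst x}"
  proof (cases "k+1 \<le> card {y\<in>A. snd y = snd x}")
    case True
    have "{y\<in>A. snd y = snd x} \<subseteq> {y\<in>?B. snd y = snd x}"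
    proof
      fix y assume y: "y \<in> {y\<in>A. snd y = snd x}"
      then have "{z\<in>A. snd z = snd y} = {y\<in>A. snd y = snd x}" by auto
      then show "y \<in> {y\<in>?B. snd y = snd x}" using y True by auto
    qed
    then have "card {y\<in>A. snd y = snd x} \<le> card {y\<in>?B. snd y = snd x}"
      using fA by (intro card_mono) auto
    then show ?thesis using True by simp
  next
    case False
    then have T: "k+1 \<le> card {y\<in>A. fst y = fst x}" using x by auto
    have "{y\<in>A. fst y = fst x} \<subseteq> {y\<in>?B. fst y = fst x}"
    proof
      fix y assume y: "y \<in> {y\<in>A. fst y = fst x}"
      then have "{z\<in>A. fst z = fst y} = {y\<in>A. fst y = fst x}" by auto
      then show "y \<in> {y\<in>?B. fst y = fst x}" using y T by auto
    qed
    then have "card {y\<in>A. fst y = fst x} \<le> card {y\<in>?B. fst y = fst x}"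
      using fA by (intro card_mono) auto
    then show ?thesis using T by simp
  qed
qed

lemma span_prob_le:
  assumes zs: "zero_set Z" and fZ: "finite Z" and p0: "0 \<le> p" and p1: "p \<le> 1"
  shows "span_prob Z p N M \<le>
    (\<Sum>W\<in>{W\<in>Pow (rect N M). covered k W \<and> gamma (shift_diag Z k) \<le> card W
          \<and> card W \<le> gamma (shift_diag Z k) * (k+1)}. p ^ card W)"
proof -
  define g where "g = gamma (shift_diag Z k)"
  define R where "R = rect N M"
  define WW where "WW = {W\<in>Pow R. covered k W \<and> g \<le> card W \<and> card W \<le> g * (k+1)}"
  define w where "w (A::pt set) = p ^ card A * (1 - p) ^ (N * M - card A)" for A
  have fR: "finite R" unfolding R_def by (rule finite_rect)
  have fWW: "finite WW" unfolding WW_def using fR by simp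
  have wnn: "0 \<le> w A" for A unfolding w_def using p0 p1 by simp
  have step: "(if spans Z A then w A else 0) \<le> (\<Sum>W\<in>{W\<in>WW. W \<subseteq> A}. w A)" if A: "A \<in> Pow R" for A
  proof (cases "spans Z A")
    case False then show ?thesis using wnn by (simp add: sum_nonneg)
  next
    case True
    have fA: "finite A" using A fR finite_subset by auto
    define B where "B = {x\<in>A. k+1 \<le> card {y\<in>A. snd y = snd x} \<or> k+1 \<le> card {y\<in>A. fst y = fst x}}"
    have gB: "g \<le> card B" unfolding g_def B_def by (rule gamma_le_heavy[OF zs fZ fA True])
    have fB: "finite B" unfolding B_def using fA by simp
    have cB: "covered k B" unfolding B_def by (rule heavy_covered[OF fA])
    obtain W where W: "W \<subseteq> B" "covered k W" "g \<le> card W" "card W \<le> g*(k+1)"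
      using extract_witness[OF fB cB gB] by blast
    have "W \<subseteq> A" using W(1) unfolding B_def by auto
    then have WWW: "W \<in> {W\<in>WW. W \<subseteq> A}" using W A unfolding WW_def by auto
    have "w A \<le> (\<Sum>W\<in>{W\<in>WW. W \<subseteq> A}. w A)"
      by (rule member_le_sum[OF WWW]) (use wnn fWW in auto)
    then show ?thesis using True by simp
  qed
  have "span_prob Z p N M = (\<Sum>A\<in>Pow R. if spans Z A then w A else 0)"
    unfolding span_prob_def R_def w_def by simp
  also have "\<dots> \<le> (\<Sum>A\<in>Pow R. \<Sum>W\<in>{W\<in>WW. W \<subseteq> A}. w A)"
    by (rule sum_mono) (rule step)
  also have "\<dots> = (\<Sum>W\<in>WW. \<Sum>A\<in>{A\<in>Pow R. W \<subseteq> A}. w A)"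
    using fR fWW by (subst sum.swap_restrict) auto
  also have "\<dots> = (\<Sum>W\<in>WW. p ^ card W)"
  proof (rule sum.cong[OF refl])
    fix W assume "W \<in> WW"
    then have WR: "W \<subseteq> R" unfolding WW_def by auto
    show "(\<Sum>A\<in>{A\<in>Pow R. W \<subseteq> A}. w A) = p ^ card W"
      using super_sum[OF fR WR, of p "1 - p"] unfolding w_def R_def card_rect by simp
  qed
  finally show ?thesis unfolding WW_def g_def R_def .
qed



lemma sum_small_subsets:
  fixes L :: real
  assumes L1: "1 \<le> L" and nL: "real n \<le> L"
  shows "(\<Sum>X\<in>{X\<in>Pow {..<n}. card X \<le> G}. (1/L)^card X) \<le> real G + 1"
proof -
  define XX where "XX = {X\<in>Pow {..<n}. card X \<le> G}"
  have fXX: "finite XX" unfolding XX_def by simp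
  have "(\<Sum>X\<in>XX. (1/L)^card X) = (\<Sum>j\<in>{..G}. \<Sum>X\<in>{X\<in>XX. card X = j}. (1/L)^card X)"
    by (rule sum.group[symmetric]) (use fXX in \<open>auto simp: XX_def\<close>)
  also have "\<dots> \<le> (\<Sum>j\<in>{..G}. 1)"
  proof (rule sum_mono)
    fix j assume j: "j \<in> {..G}"
    have eq: "{X\<in>XX. card X = j} = {B. B \<subseteq> {..<n} \<and> card B = j}" using j unfolding XX_def by auto
    have "(\<Sum>X\<in>{X\<in>XX. card X = j}. (1/L)^card X) = real (n choose j) * (1/L)^j"
      unfolding eq using n_subsets[of "{..<n}" j] by simp
    also have "\<dots> \<le> 1"
    proof (cases "j \<le> n")
      case True
      have "real (n choose j) \<le> real n ^ j" using binomial_le_pow[OF True] by (metis of_nat_le_iff of_nat_power)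
      also have "\<dots> \<le> L ^ j" using nL by (intro power_mono) auto
      finally have "real (n choose j) * (1/L)^j \<le> L^j * (1/L)^j" using L1 by (intro mult_right_mono) auto
      also have "\<dots> = 1" using L1 by (simp add: power_one_over)
      finally show ?thesis .
    next
      case False then show ?thesis by (simp add: binomial_eq_0 not_le)
    qed
    finally show "(\<Sum>X\<in>{X\<in>XX. card X = j}. (1/L)^card X) \<le> 1" .
  qed
  also have "\<dots> = real G + 1" by simp
  finally show ?thesis unfolding XX_def .
qed

lemma pow_le_two:
  fixes x :: real
  assumes "0 < x" "g \<le> u" "u \<le> G"
  shows "x ^ u \<le> x ^ g + x ^ G"
proof (cases "x \<le> 1")
  case True
  then have "x ^ u \<le> x ^ g" using assms by (intro power_decreasing) auto
  then show ?thesis using assms by (smt (verit) zero_le_power)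
next
  case False
  then have "x ^ u \<le> x ^ G" using assms by (intro power_increasing) auto
  then show ?thesis using assms by (smt (verit) zero_le_power)
qed

lemma count_bound:
  fixes L p :: real
  assumes L1: "1 \<le> L" and NL: "real N \<le> L" and hML: "real M \<le> L" and p0: "0 < p"
  shows "(\<Sum>W\<in>{W\<in>Pow (rect N M). covered k W \<and> g \<le> card W \<and> card W \<le> G}. p ^ card W)
       \<le> ((L powr ((real k+2)/(real k+1)) * p) ^ g + (L powr ((real k+2)/(real k+1)) * p) ^ G)
          * (2 ^ (G*G) * (real G + 1)^2)"
proof -
  define a :: real where "a = (real k+2)/(real k+1)"
  define x where "x = L powr a * p"
  define WW where "WW = {W\<in>Pow (rect N M). covered k W \<and> g \<le> card W \<and> card W \<le> G}"
  define h where "h W = (1/L) ^ (card (fst ` W) + card (snd ` W))" for W :: "pt set"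
  have x0: "0 < x" unfolding x_def using L1 p0 by simp
  have fR: "finite (rect N M)" unfolding rect_def
    by (rule finite_subset[of _ "{..<N} \<times> {..<M}"]) auto
  have fWW: "finite WW" unfolding WW_def using fR by simp
  have pt: "p ^ card W \<le> (x ^ g + x ^ G) * h W" if W: "W \<in> WW" for W
  proof -
    define u where "u = card W"
    define rc where "rc = card (fst ` W) + card (snd ` W)"
    have fW: "finite W" using W fR finite_subset unfolding WW_def by auto
    have cov: "covered k W" using W unfolding WW_def by auto
    have cc: "(k+1) * rc \<le> (k+2) * u" unfolding rc_def u_def by (rule covered_count[OF fW cov])
    have rcau: "real rc \<le> a * real u"
    proof -
      have "real (k+1) * real rc \<le> real (k+2) * real u" using cc by (metis of_nat_le_iff of_nat_mult)
      then show ?thesis unfolding a_def by (simp add: field_simps)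
    qed
    have e1: "x ^ u = L powr (a * u) * p ^ u" unfolding x_def using L1
      by (simp add: power_mult_distrib powr_power mult.commute)
    have e2: "p ^ u = x ^ u * L powr (- (a * u))"
      unfolding e1 using L1 by (simp add: powr_minus field_simps)
    have "L powr (- (a * u)) \<le> L powr (- real rc)" using rcau L1 by (intro powr_mono) auto
    also have "L powr (- real rc) = h W" unfolding h_def rc_def[symmetric] using L1
      by (simp add: powr_minus powr_realpow power_one_over inverse_eq_divide)
    finally have hle: "L powr (- (a * u)) \<le> h W" .
    have "p ^ u \<le> x ^ u * h W" unfolding e2 using hle x0 by (intro mult_left_mono) auto
    also have "\<dots> \<le> (x ^ g + x ^ G) * h W"
      using pow_le_two[OF x0, of g u G] W L1 unfolding WW_def u_def h_def
      by (intro mult_right_mono) auto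
    finally show ?thesis unfolding u_def .
  qed
  define XX where "XX = {X\<in>Pow {..<N}. card X \<le> G}"
  define YY where "YY = {Y\<in>Pow {..<M}. card Y \<le> G}"
  define phi where "phi W = (fst ` W, snd ` W)" for W :: "pt set"
  have fXY: "finite (XX \<times> YY)" unfolding XX_def YY_def by simp
  have img: "phi ` WW \<subseteq> XX \<times> YY"
  proof
    fix z assume "z \<in> phi ` WW"
    then obtain W where W: "W \<in> WW" "z = phi W" by blast
    have fW: "finite W" using W fR finite_subset unfolding WW_def by auto
    have "card (fst ` W) \<le> G" "card (snd ` W) \<le> G"
      using card_image_le[OF fW, of fst] card_image_le[OF fW, of snd] W(1) unfolding WW_def by auto
    moreover have "fst ` W \<subseteq> {..<N}" "snd ` W \<subseteq> {..<M}" using W(1) unfolding WW_def rect_def by auto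
    ultimately show "z \<in> XX \<times> YY" unfolding W(2) phi_def XX_def YY_def by auto
  qed
  have "(\<Sum>W\<in>WW. h W) = (\<Sum>z\<in>XX \<times> YY. \<Sum>W\<in>{W\<in>WW. phi W = z}. h W)"
    by (rule sum.group[symmetric, OF fWW fXY img])
  also have "\<dots> \<le> (\<Sum>z\<in>XX \<times> YY. 2 ^ (G*G) * ((1/L) ^ card (fst z) * (1/L) ^ card (snd z)))"
  proof (rule sum_mono)
    fix z assume z: "z \<in> XX \<times> YY"
    obtain X Y where XY: "z = (X, Y)" by (cases z)
    have fX: "finite X" "finite Y" "card X \<le> G" "card Y \<le> G"
      using z XY unfolding XX_def YY_def by (auto intro: finite_subset)
    have sub: "{W\<in>WW. phi W = z} \<subseteq> Pow (X \<times> Y)"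
      unfolding phi_def XY by force
    have "card {W\<in>WW. phi W = z} \<le> card (Pow (X \<times> Y))"
      using fX by (intro card_mono[OF _ sub]) auto
    also have "\<dots> = 2 ^ (card X * card Y)" using fX by (simp add: card_Pow card_cartesian_product)
    also have "\<dots> \<le> 2 ^ (G * G)" using fX by (intro power_increasing mult_le_mono) auto
    finally have cardle: "real (card {W\<in>WW. phi W = z}) \<le> 2 ^ (G*G)"
      by (metis of_nat_le_iff of_nat_numeral of_nat_power)
    have "(\<Sum>W\<in>{W\<in>WW. phi W = z}. h W) = (\<Sum>W\<in>{W\<in>WW. phi W = z}. (1/L) ^ card X * (1/L) ^ card Y)"
      by (rule sum.cong[OF refl]) (auto simp: h_def phi_def XY power_add)
    also have "\<dots> = real (card {W\<in>WW. phi W = z}) * ((1/L) ^ card X * (1/L) ^ card Y)" by simp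
    also have "\<dots> \<le> 2 ^ (G*G) * ((1/L) ^ card X * (1/L) ^ card Y)"
      using cardle L1 by (intro mult_right_mono) auto
    finally show "(\<Sum>W\<in>{W\<in>WW. phi W = z}. h W) \<le> 2 ^ (G*G) * ((1/L) ^ card (fst z) * (1/L) ^ card (snd z))"
      unfolding XY by simp
  qed
  also have "\<dots> = 2 ^ (G*G) * ((\<Sum>X\<in>XX. (1/L) ^ card X) * (\<Sum>Y\<in>YY. (1/L) ^ card Y))"
  proof -
    have "(\<Sum>X\<in>XX. \<Sum>Y\<in>YY. (1/L) ^ card X * (1/L) ^ card Y)
        = (\<Sum>z\<in>XX \<times> YY. (1/L) ^ card (fst z) * (1/L) ^ card (snd z))"
      by (subst sum.cartesian_product) (simp add: case_prod_beta)
    then show ?thesis by (simp add: sum_distrib_left[symmetric] sum_product)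
  qed
  also have "\<dots> \<le> 2 ^ (G*G) * ((real G + 1) * (real G + 1))"
    using sum_small_subsets[OF L1 NL, of G] sum_small_subsets[OF L1 hML, of G]
    unfolding XX_def YY_def using L1
    by (intro mult_left_mono mult_mono) (auto intro!: sum_nonneg)
  finally have hsum: "(\<Sum>W\<in>WW. h W) \<le> 2 ^ (G*G) * (real G + 1)^2" by (simp add: power2_eq_square)
  have "(\<Sum>W\<in>WW. p ^ card W) \<le> (\<Sum>W\<in>WW. (x ^ g + x ^ G) * h W)" by (rule sum_mono) (rule pt)
  also have "\<dots> = (x ^ g + x ^ G) * (\<Sum>W\<in>WW. h W)" by (simp add: sum_distrib_left)
  also have "\<dots> \<le> (x ^ g + x ^ G) * (2 ^ (G*G) * (real G + 1)^2)"
    using hsum x0 by (intro mult_left_mono) auto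
  finally show ?thesis unfolding WW_def x_def a_def by (simp add: ac_simps)
qed



lemma span_prob_le1:
  assumes "0 \<le> p" "p \<le> 1"
  shows "span_prob Z p N M \<le> 1"
proof -
  have "span_prob Z p N M \<le> (\<Sum>A\<in>Pow (rect N M). p ^ card A * (1 - p) ^ (N * M - card A))"
    unfolding span_prob_def using assms by (intro sum_mono) auto
  also have "\<dots> = (\<Sum>A\<in>{A\<in>Pow (rect N M). {} \<subseteq> A}. p ^ card A * (1 - p) ^ (card (rect N M) - card A))"
    unfolding card_rect by (simp add: Pow_def)
  also have "\<dots> = 1" using super_sum[OF finite_rect, where W="{}" and p=p and q="1 - p"] by simp
  finally show ?thesis .
qed

lemma span_prob_nonneg:
  assumes "0 \<le> p" "p \<le> 1"
  shows "0 \<le> span_prob Z p N M"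
  unfolding span_prob_def using assms by (intro sum_nonneg) auto

lemma rate_nonneg:
  assumes "0 < p" "p < 1"
  shows "0 \<le> rate_ratio Z p N M"
proof (cases "span_prob Z p N M = 0")
  case True then show ?thesis unfolding rate_ratio_def by simp
next
  case False
  have "0 < span_prob Z p N M" using span_prob_nonneg[of p Z N M] assms False by simp
  then have "ln (span_prob Z p N M) \<le> 0" using span_prob_le1[of p Z N M] assms by simp
  moreover have "ln p < 0" using assms by simp
  ultimately have "0 \<le> ln (span_prob Z p N M) / ln p" by (simp add: divide_nonpos_neg)
  then show ?thesis unfolding rate_ratio_def using False by simp
qed

theorem mainTheorem14:
  fixes Z :: "pt set" and k :: nat and \<alpha> \<beta> :: real
    and N M :: "real \<Rightarrow> nat"
  assumes "zero_set Z" and "finite Z"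
    and "0 \<le> \<alpha>" and "\<alpha> \<le> 1" and "0 \<le> \<beta>" and "\<beta> \<le> 1"
    and "filterlim N at_top (at_right 0)" and "filterlim M at_top (at_right 0)"
    and "((\<lambda>p. ln (real (N p)) / (- ln p)) \<longlongrightarrow> \<alpha>) (at_right 0)"
    and "((\<lambda>p. ln (real (M p)) / (- ln p)) \<longlongrightarrow> \<beta>) (at_right 0)"
  shows "Liminf (at_right 0) (\<lambda>p. rate_ratio Z p (N p) (M p))
           \<ge> ereal (real (gamma (shift_diag Z k)) * (1 - max \<alpha> \<beta> * (1 + 1 / (real k + 1))))"
proof -
  define g where "g = gamma (shift_diag Z k)"
  define G where "G = g * (k+1)"
  define m where "m = max \<alpha> \<beta>"
  define c :: real where "c = (real k + 2) / (real k + 1)"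
  define e where "e = 1 - c * m"
  define K :: real where "K = 2 ^ (G*G) * (real G + 1)^2"
  define Lf where "Lf p = real (max (N p) (M p))" for p
  define x where "x p = Lf p powr c * p" for p
  have ce: "1 + 1 / (real k + 1) = c" unfolding c_def by (simp add: field_simps)
  have RHS: "real g * (1 - m * (1 + 1 / (real k + 1))) = real g * e"
    unfolding ce e_def by (simp add: algebra_simps)
  have K0: "0 < K" unfolding K_def by (simp add: add_pos_nonneg)
  have ev01: "eventually (\<lambda>p::real. 0 < p \<and> p < 1) (at_right 0)"
    using eventually_at_right_real[of 0 1] by simp
  have evN: "eventually (\<lambda>p. 1 \<le> N p) (at_right 0)"
    using assms(7) unfolding filterlim_at_top by blast
  have evM: "eventually (\<lambda>p. 1 \<le> M p) (at_right 0)"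
    using assms(8) unfolding filterlim_at_top by blast
  have evall: "eventually (\<lambda>p. 0 < p \<and> p < 1 \<and> 1 \<le> N p \<and> 1 \<le> M p) (at_right 0)"
    using ev01 evN evM by eventually_elim auto
  have bound: "span_prob Z p (N p) (M p) \<le> (x p ^ g + x p ^ G) * K"
    if p: "0 < p" "p < 1" "1 \<le> N p" "1 \<le> M p" for p
  proof -
    have L1: "1 \<le> Lf p" unfolding Lf_def using p by simp
    have "span_prob Z p (N p) (M p) \<le>
      (\<Sum>W\<in>{W\<in>Pow (rect (N p) (M p)). covered k W \<and> g \<le> card W \<and> card W \<le> G}. p ^ card W)"
      unfolding g_def G_def using span_prob_le[OF assms(1,2), where p=p and k=k and N="N p" and M="M p"] p by simp
    also have "\<dots> \<le> ((Lf p powr ((real k+2)/(real k+1)) * p) ^ g + (Lf p powr ((real k+2)/(real k+1)) * p) ^ G)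
          * (2 ^ (G*G) * (real G + 1)^2)"
      by (rule count_bound) (use L1 p in \<open>auto simp: Lf_def\<close>)
    also have "\<dots> = (x p ^ g + x p ^ G) * K" unfolding x_def K_def c_def by (simp add: ac_simps)
    finally show ?thesis .
  qed
  have T1: "((\<lambda>p. ln (Lf p) / (- ln p)) \<longlongrightarrow> m) (at_right 0)"
  proof -
    have "((\<lambda>p. max (ln (real (N p)) / (- ln p)) (ln (real (M p)) / (- ln p))) \<longlongrightarrow> m) (at_right 0)"
      unfolding m_def by (intro tendsto_max assms(9,10))
    moreover have "eventually (\<lambda>p. max (ln (real (N p)) / (- ln p)) (ln (real (M p)) / (- ln p))
        = ln (Lf p) / (- ln p)) (at_right 0)"
      using evall
    proof eventually_elim
      case (elim p)
      then have lp: "0 < - ln p" by simp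
      show ?case
      proof (cases "N p \<le> M p")
        case True
        then have "ln (real (N p)) \<le> ln (real (M p))" using elim by simp
        then have "ln (real (N p)) / (- ln p) \<le> ln (real (M p)) / (- ln p)" using lp by (intro divide_right_mono) auto
        then show ?thesis using True unfolding Lf_def by (simp add: max_def)
      next
        case False
        then have "ln (real (M p)) \<le> ln (real (N p))" using elim by simp
        then have "ln (real (M p)) / (- ln p) \<le> ln (real (N p)) / (- ln p)" using lp by (intro divide_right_mono) auto
        then show ?thesis using False unfolding Lf_def by (simp add: max_def)
      qed
    qed
    ultimately show ?thesis by (rule Lim_transform_eventually)
  qed
  have T2: "((\<lambda>p. ln (x p) / ln p) \<longlongrightarrow> e) (at_right 0)"
  proof -
    have "((\<lambda>p. 1 - c * (ln (Lf p) / (- ln p))) \<longlongrightarrow> 1 - c * m) (at_right 0)"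
      by (intro tendsto_intros T1)
    moreover have "eventually (\<lambda>p. 1 - c * (ln (Lf p) / (- ln p)) = ln (x p) / ln p) (at_right 0)"
      using evall
    proof eventually_elim
      case (elim p)
      then have L0: "0 < Lf p" unfolding Lf_def by (simp add: less_max_iff_disj)
      have lp: "ln p \<noteq> 0" using elim by simp
      have "ln (x p) = c * ln (Lf p) + ln p" unfolding x_def using L0 elim by (simp add: ln_mult ln_powr)
      then show ?case using lp by (simp add: field_simps)
    qed
    ultimately show ?thesis unfolding e_def by (rule Lim_transform_eventually)
  qed
  have lnat: "filterlim ln at_infinity (at_right (0::real))"
    by (rule filterlim_mono[OF ln_at_0 at_bot_le_at_infinity order_refl])
  show ?thesis
    unfolding g_def[symmetric] m_def[symmetric] RHS
  proof (cases "g = 0 \<or> e \<le> 0")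
    case True
    then have "real g * e \<le> 0" by (auto simp: mult_nonneg_nonpos)
    moreover have "eventually (\<lambda>p. 0 \<le> rate_ratio Z p (N p) (M p)) (at_right 0)"
      using ev01 by eventually_elim (simp add: rate_nonneg)
    then have "0 \<le> Liminf (at_right 0) (\<lambda>p. rate_ratio Z p (N p) (M p))" by (rule Liminf_bounded)
    ultimately show "ereal (real g * e) \<le> Liminf (at_right 0) (\<lambda>p. rate_ratio Z p (N p) (M p))"
    proof -
      assume a: "real g * e \<le> 0" and b: "0 \<le> Liminf (at_right 0) (\<lambda>p. rate_ratio Z p (N p) (M p))"
      have "ereal (real g * e) \<le> 0" using a by (simp add: zero_ereal_def)
      then show ?thesis using b by (rule order_trans)
    qed
  next
    case False
    then have g0: "0 < g" and e0: "0 < e" by auto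
    define lower where "lower p = ln (2 * K) / ln p + real g * (ln (x p) / ln p)" for p
    have T3: "((\<lambda>p. ereal (lower p)) \<longlongrightarrow> ereal (real g * e)) (at_right 0)"
    proof -
      have "((\<lambda>p. ln (2 * K) / ln p) \<longlongrightarrow> 0) (at_right 0)"
        by (rule tendsto_divide_0[OF tendsto_const lnat])
      then have "(lower \<longlongrightarrow> 0 + real g * e) (at_right 0)"
        unfolding lower_def[abs_def] by (intro tendsto_intros T2)
      then show ?thesis by simp
    qed
    have evx: "eventually (\<lambda>p. e / 2 < ln (x p) / ln p) (at_right 0)"
      using T2 e0 by (intro order_tendstoD(1)) auto
    have evlow: "eventually (\<lambda>p. ereal (lower p) \<le> rate_ratio Z p (N p) (M p)) (at_right 0)"
      using evall evx
    proof eventually_elim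
      case (elim p)
      have L1: "1 \<le> Lf p" unfolding Lf_def using elim by (simp add: le_max_iff_disj)
      have x0: "0 < x p" unfolding x_def using L1 elim by simp
      have lnp: "ln p < 0" using elim by simp
      have "ln (x p) / ln p > 0" using elim(2) e0 by (smt (verit) half_gt_zero)
      then have "ln (x p) < 0" using lnp by (simp add: zero_less_divide_iff)
      then have x1: "x p < 1" using x0 by simp
      have "x p ^ G \<le> x p ^ g" unfolding G_def using x0 x1 by (intro power_decreasing) auto
      then have "(x p ^ g + x p ^ G) * K \<le> (2 * x p ^ g) * K" using K0 by (intro mult_right_mono) auto
      moreover have "span_prob Z p (N p) (M p) \<le> (x p ^ g + x p ^ G) * K"
        using bound[of p] elim by blast
      ultimately have sb: "span_prob Z p (N p) (M p) \<le> 2 * K * x p ^ g" by (simp add: ac_simps)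
      show ?case
      proof (cases "span_prob Z p (N p) (M p) = 0")
        case True then show ?thesis unfolding rate_ratio_def by simp
      next
        case False
        have sp0: "0 < span_prob Z p (N p) (M p)"
          using span_prob_nonneg[of p Z "N p" "M p"] elim False by simp
        have "ln (span_prob Z p (N p) (M p)) \<le> ln (2 * K * x p ^ g)"
          using sb sp0 by simp
        also have "\<dots> = ln (2 * K) + real g * ln (x p)" using K0 x0 by (simp add: ln_mult ln_realpow)
        finally have "(ln (2 * K) + real g * ln (x p)) / ln p \<le> ln (span_prob Z p (N p) (M p)) / ln p"
          using lnp by (simp add: divide_right_mono_neg)
        then have "lower p \<le> ln (span_prob Z p (N p) (M p)) / ln p"
          unfolding lower_def by (simp add: add_divide_distrib)
        then show ?thesis unfolding rate_ratio_def using False by simp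
      qed
    qed
    show "ereal (real g * e) \<le> Liminf (at_right 0) (\<lambda>p. rate_ratio Z p (N p) (M p))"
      unfolding le_Liminf_iff
    proof (intro allI impI)
      fix y assume y: "y < ereal (real g * e)"
      have "eventually (\<lambda>p. y < ereal (lower p)) (at_right 0)"
        using T3 y by (rule order_tendstoD(1))
      then show "eventually (\<lambda>p. y < rate_ratio Z p (N p) (M p)) (at_right 0)"
        using evlow by eventually_elim (rule less_le_trans)
    qed
  qed
qed


end
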